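(* If $G$ is a graph with maximum degree $\Delta(G)\ge 3$, then $\alpha_{\mathrm{od}}(G)\ge |G|/((\Delta(G))^2-1)$.
   Context: All graphs are finite and simple; $|G|$ is the number of vertices. An odd independent set in $G=(V,E)$ is an independent set $S\subseteq V$ such that for every $v\in V\setminus S$, either $N(v)\cap S=\varnothing$ or $|N(v)\cap S|$ is odd, where $N(v)$ is the open neighborhood of $v$. $\alpha_{\mathrm{od}}(G)$ is the maximum size of an odd independent set of $G$. *)

theory Defs
  imports Complex_Main
begin

definition simple_graph :: "'a set \<Rightarrow> ('a \<Rightarrow> 'a \<Rightarrow> bool) \<Rightarrow> bool" where
  "simple_graph V E \<longleftrightarrow> finite V \<and> (\<forall>u v. E u v \<longrightarrow> u \<in> V \<and> v \<in> V)
     \<and> (\<forall>u v. E u v \<longrightarrow> E v u) \<and> (\<forall>v. \<not> E v v)"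

definition nbhd :: "'a set \<Rightarrow> ('a \<Rightarrow> 'a \<Rightarrow> bool) \<Rightarrow> 'a \<Rightarrow> 'a set" where
  "nbhd V E v = {u \<in> V. E v u}"

definition degree :: "'a set \<Rightarrow> ('a \<Rightarrow> 'a \<Rightarrow> bool) \<Rightarrow> 'a \<Rightarrow> nat" where
  "degree V E v = card (nbhd V E v)"

definition max_degree :: "'a set \<Rightarrow> ('a \<Rightarrow> 'a \<Rightarrow> bool) \<Rightarrow> nat" where
  "max_degree V E = Max (insert 0 (degree V E ` V))"

definition independent_set :: "'a set \<Rightarrow> ('a \<Rightarrow> 'a \<Rightarrow> bool) \<Rightarrow> 'a set \<Rightarrow> bool" where
  "independent_set V E S \<longleftrightarrow> S \<subseteq> V \<and> (\<forall>u\<in>S. \<forall>v\<in>S. \<not> E u v)"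

definition odd_independent_set :: "'a set \<Rightarrow> ('a \<Rightarrow> 'a \<Rightarrow> bool) \<Rightarrow> 'a set \<Rightarrow> bool" where
  "odd_independent_set V E S \<longleftrightarrow> independent_set V E S \<and>
     (\<forall>v \<in> V - S. nbhd V E v \<inter> S = {} \<or> odd (card (nbhd V E v \<inter> S)))"

definition alpha_od :: "'a set \<Rightarrow> ('a \<Rightarrow> 'a \<Rightarrow> bool) \<Rightarrow> nat" where
  "alpha_od V E = Max (card ` {S. odd_independent_set V E S})"

end

theory Submission
  imports Defs
begin

locale G3 =
  fixes V :: "'a set" and E :: "'a \<Rightarrow> 'a \<Rightarrow> bool" and D :: nat
  assumes sg: "simple_graph V E"
    and degle: "\<And>v. v \<in> V \<Longrightarrow> card (nbhd V E v) \<le> D"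
    and D3: "3 \<le> D"
begin

abbreviation N where "N v \<equiv> nbhd V E v"

lemma finV: "finite V" using sg unfolding simple_graph_def by blast
lemma inV: "E u v \<Longrightarrow> u \<in> V \<and> v \<in> V" using sg unfolding simple_graph_def by blast
lemma symE: "E u v \<Longrightarrow> E v u" using sg unfolding simple_graph_def by blast
lemma irr: "\<not> E v v" using sg unfolding simple_graph_def by blast

lemma N_iff: "x \<in> N v \<longleftrightarrow> E v x" unfolding nbhd_def using inV by auto
lemma finN: "finite (N v)" using finV by (simp add: nbhd_def)
lemma NsubV: "N v \<subseteq> V" by (auto simp: nbhd_def)

definition B2 :: "'a set \<Rightarrow> 'a set" where
  "B2 U = {x \<in> V. \<exists>u\<in>U. x = u \<or> E u x \<or> (\<exists>z. E u z \<and> E z x)}"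

lemma finB2: "finite (B2 U)" using finV by (simp add: B2_def)
lemma B2sub: "B2 U \<subseteq> V" by (auto simp: B2_def)
lemma B2_self: "U \<subseteq> V \<Longrightarrow> U \<subseteq> B2 U" by (auto simp: B2_def)
lemma B2_insert: "B2 (insert a U) = B2 {a} \<union> B2 U" by (auto simp: B2_def)
lemma B2_mem: "x \<in> B2 {v} \<longleftrightarrow> x \<in> V \<and> (x = v \<or> E v x \<or> (\<exists>z. E v z \<and> E z x))"
  by (auto simp: B2_def)

definition A :: "'a \<Rightarrow> 'a \<Rightarrow> 'a set" where "A v u = insert u (N u - {v})"

lemma finA: "finite (A v u)" using finN by (simp add: A_def)

lemma B2_decomp: "v \<in> V \<Longrightarrow> B2 {v} = insert v (\<Union>u\<in>N v. A v u)"
  by (auto simp: B2_mem A_def N_iff dest: inV) (use N_iff in blast)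

lemma card_A: assumes "u \<in> N v" shows "card (A v u) \<le> D"
proof -
  have u: "u \<in> V" and vu: "v \<in> N u" using assms inV by (auto simp: N_iff symE)
  have "card (N u - {v}) = card (N u) - 1" using vu finN by simp
  moreover have "card (N u) \<ge> 1" using vu finN by (metis One_nat_def Suc_leI card_gt_0_iff empty_iff)
  moreover have "card (N u) \<le> D" using degle u by blast
  ultimately have "card (N u - {v}) \<le> D - 1" by linarith
  then show ?thesis unfolding A_def using D3 by (intro card_insert_le_m1) auto
qed

lemma ball_gen: "v \<in> V \<Longrightarrow> card (B2 {v}) \<le> 1 + (\<Sum>u\<in>N v. card (A v u))"
proof -
  assume v: "v \<in> V"
  have "card (B2 {v}) \<le> Suc (card (\<Union>u\<in>N v. A v u))"
    unfolding B2_decomp[OF v] by (metis card_insert_le_m1 diff_Suc_1 le_refl zero_less_Suc)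
  also have "card (\<Union>u\<in>N v. A v u) \<le> (\<Sum>u\<in>N v. card (A v u))" by (rule card_UN_le[OF finN])
  finally show ?thesis by simp
qed

lemma sumA: "(\<Sum>u\<in>N v. card (A v u)) \<le> D * card (N v)"
proof -
  have "(\<Sum>u\<in>N v. card (A v u)) \<le> of_nat (card (N v)) * D"
    by (rule sum_bounded_above) (rule card_A)
  then show ?thesis by (simp add: mult.commute)
qed

lemma ball_bound: "v \<in> V \<Longrightarrow> card (B2 {v}) \<le> 1 + D * card (N v)"
  using ball_gen sumA by (meson add_le_mono le_refl order_trans)

lemma ball_bound2: "v \<in> V \<Longrightarrow> card (B2 {v}) \<le> 1 + D * D"
proof -
  assume v: "v \<in> V"
  have "D * card (N v) \<le> D * D" using degle[OF v] by simp
  then show ?thesis using ball_bound[OF v] by linarith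
qed


lemma UN_split:
  assumes "finite I" "J \<subseteq> I" "\<And>i. finite (F i)"
  shows "card (\<Union>i\<in>I. F i) + (\<Sum>i\<in>J. card (F i)) \<le> card (\<Union>i\<in>J. F i) + (\<Sum>i\<in>I. card (F i))"
proof -
  have fJ: "finite J" using assms finite_subset by blast
  have eq: "(\<Union>i\<in>I. F i) = (\<Union>i\<in>J. F i) \<union> (\<Union>i\<in>I-J. F i)" using assms(2) by blast
  have "card (\<Union>i\<in>I. F i) \<le> card (\<Union>i\<in>J. F i) + card (\<Union>i\<in>I-J. F i)"
    unfolding eq by (rule card_Un_le)
  also have "card (\<Union>i\<in>I-J. F i) \<le> (\<Sum>i\<in>I-J. card (F i))" by (rule card_UN_le) (use assms in auto)
  finally have "card (\<Union>i\<in>I. F i) \<le> card (\<Union>i\<in>J. F i) + (\<Sum>i\<in>I-J. card (F i))" by simp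
  moreover have "(\<Sum>i\<in>I. card (F i)) = (\<Sum>i\<in>I-J. card (F i)) + (\<Sum>i\<in>J. card (F i))"
    using sum.subset_diff[OF assms(2,1)] by simp
  ultimately show ?thesis by linarith
qed

lemma card_int_pos: "finite X \<Longrightarrow> X \<inter> Y \<noteq> {} \<Longrightarrow> 1 \<le> card (X \<inter> Y)"
  by (simp add: Suc_leI card_gt_0_iff)

lemma loss1:
  assumes "finite I" "\<And>i. finite (F i)" "a \<in> I" "b \<in> I" "a \<noteq> b" "F a \<inter> F b \<noteq> {}"
  shows "card (\<Union>i\<in>I. F i) + 1 \<le> (\<Sum>i\<in>I. card (F i))"
proof -
  have s: "{a,b} \<subseteq> I" using assms by auto
  have u: "(\<Union>i\<in>{a,b}. F i) = F a \<union> F b" by auto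
  have "card (F a) + card (F b) = card (F a \<union> F b) + card (F a \<inter> F b)"
    using card_Un_Int assms(2) by blast
  moreover have "1 \<le> card (F a \<inter> F b)" using card_int_pos assms by blast
  moreover have sp: "card (\<Union>i\<in>I. F i) + (\<Sum>i\<in>{a,b}. card (F i)) \<le> card (\<Union>i\<in>{a,b}. F i) + (\<Sum>i\<in>I. card (F i))"
    by (rule UN_split[OF assms(1) s]) (rule assms(2))
  ultimately show ?thesis using assms(5) unfolding u by simp
qed

lemma loss2a:
  assumes "finite I" "\<And>i. finite (F i)" "a \<in> I" "b \<in> I" "c \<in> I" "a \<noteq> b" "a \<noteq> c" "b \<noteq> c"
    "F a \<inter> F b \<noteq> {}" "F a \<inter> F c \<noteq> {}"
  shows "card (\<Union>i\<in>I. F i) + 2 \<le> (\<Sum>i\<in>I. card (F i))"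
proof -
  have s: "{a,b,c} \<subseteq> I" using assms by auto
  have u: "(\<Union>i\<in>{a,b,c}. F i) = (F a \<union> F b) \<union> F c" by auto
  have 1: "card (F a) + card (F b) = card (F a \<union> F b) + card (F a \<inter> F b)"
    using card_Un_Int assms(2) by blast
  have 2: "card (F a \<union> F b) + card (F c) = card ((F a \<union> F b) \<union> F c) + card ((F a \<union> F b) \<inter> F c)"
    using card_Un_Int assms(2) by (meson finite_UnI)
  have 3: "1 \<le> card (F a \<inter> F b)" using card_int_pos assms by blast
  have 4: "1 \<le> card ((F a \<union> F b) \<inter> F c)" using card_int_pos assms(2,10) by (metis Int_Un_distrib2 Un_empty finite_UnI)
  have sm: "(\<Sum>i\<in>{a,b,c}. card (F i)) = card (F a) + card (F b) + card (F c)" using assms by simp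
  have sp: "card (\<Union>i\<in>I. F i) + (\<Sum>i\<in>{a,b,c}. card (F i)) \<le> card (\<Union>i\<in>{a,b,c}. F i) + (\<Sum>i\<in>I. card (F i))"
    by (rule UN_split[OF assms(1) s]) (rule assms(2))
  show ?thesis using sp 1 2 3 4 unfolding u sm by linarith
qed

lemma loss2b:
  assumes "finite I" "\<And>i. finite (F i)" "a \<in> I" "b \<in> I" "c \<in> I" "d \<in> I"
    "a \<noteq> b" "a \<noteq> c" "a \<noteq> d" "b \<noteq> c" "b \<noteq> d" "c \<noteq> d"
    "F a \<inter> F b \<noteq> {}" "F c \<inter> F d \<noteq> {}"
  shows "card (\<Union>i\<in>I. F i) + 2 \<le> (\<Sum>i\<in>I. card (F i))"
proof -
  have s: "{a,b,c,d} \<subseteq> I" using assms by auto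
  have u: "(\<Union>i\<in>{a,b,c,d}. F i) = (F a \<union> F b) \<union> (F c \<union> F d)" by auto
  have 1: "card (F a) + card (F b) = card (F a \<union> F b) + card (F a \<inter> F b)"
    using card_Un_Int assms(2) by blast
  have 2: "card (F c) + card (F d) = card (F c \<union> F d) + card (F c \<inter> F d)"
    using card_Un_Int assms(2) by blast
  have 3: "1 \<le> card (F a \<inter> F b)" "1 \<le> card (F c \<inter> F d)" using card_int_pos assms by blast+
  have 5: "card ((F a \<union> F b) \<union> (F c \<union> F d)) \<le> card (F a \<union> F b) + card (F c \<union> F d)"
    by (rule card_Un_le)
  have sm: "(\<Sum>i\<in>{a,b,c,d}. card (F i)) = card (F a) + card (F b) + card (F c) + card (F d)" using assms by simp
  have sp: "card (\<Union>i\<in>I. F i) + (\<Sum>i\<in>{a,b,c,d}. card (F i)) \<le> card (\<Union>i\<in>{a,b,c,d}. F i) + (\<Sum>i\<in>I. card (F i))"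
    by (rule UN_split[OF assms(1) s]) (rule assms(2))
  show ?thesis using sp 1 2 3 5 unfolding u sm by linarith
qed

definition bad :: "'a \<Rightarrow> 'a \<Rightarrow> 'a \<Rightarrow> bool" where
  "bad w a b \<longleftrightarrow> a \<noteq> b \<and> (E a b \<or> (\<exists>y. y \<noteq> w \<and> E a y \<and> E b y))"

lemma bad_sym: "bad w a b \<Longrightarrow> bad w b a" unfolding bad_def using symE by blast

lemma bad_A: assumes "a \<in> N w" "b \<in> N w" "bad w a b" shows "A w a \<inter> A w b \<noteq> {}"
proof -
  have "E w b" using assms N_iff by blast
  then have bw: "b \<noteq> w" using irr by blast
  show ?thesis
  proof (cases "E a b")
    case True
    then have "b \<in> A w a" using bw by (simp add: A_def N_iff)
    moreover have "b \<in> A w b" by (simp add: A_def)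
    ultimately show ?thesis by blast
  next
    case False
    then obtain y where "y \<noteq> w" "E a y" "E b y" using assms(3) unfolding bad_def by blast
    then have "y \<in> A w a" "y \<in> A w b" by (auto simp: A_def N_iff)
    then show ?thesis by blast
  qed
qed

lemma ball_bad1:
  assumes "v \<in> V" "a \<in> N v" "b \<in> N v" "bad v a b"
  shows "card (B2 {v}) + 1 \<le> 1 + D * card (N v)"
proof -
  have "card (\<Union>u\<in>N v. A v u) + 1 \<le> (\<Sum>u\<in>N v. card (A v u))"
    by (rule loss1[OF finN finA assms(2,3)]) (use assms bad_A bad_def in auto)
  moreover have "card (B2 {v}) \<le> Suc (card (\<Union>u\<in>N v. A v u))"
    unfolding B2_decomp[OF assms(1)] by (metis card_insert_le_m1 diff_Suc_1 le_refl zero_less_Suc)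
  ultimately show ?thesis using sumA[of v] by linarith
qed

lemma ball_bad2a:
  assumes "v \<in> V" "a \<in> N v" "b \<in> N v" "c \<in> N v" "b \<noteq> c" "bad v a b" "bad v a c"
  shows "card (B2 {v}) + 2 \<le> 1 + D * card (N v)"
proof -
  have "card (\<Union>u\<in>N v. A v u) + 2 \<le> (\<Sum>u\<in>N v. card (A v u))"
    by (rule loss2a[OF finN finA assms(2,3,4)]) (use assms bad_A bad_def in auto)
  moreover have "card (B2 {v}) \<le> Suc (card (\<Union>u\<in>N v. A v u))"
    unfolding B2_decomp[OF assms(1)] by (metis card_insert_le_m1 diff_Suc_1 le_refl zero_less_Suc)
  ultimately show ?thesis using sumA[of v] by linarith
qed

lemma ball_bad2b:
  assumes "v \<in> V" "a \<in> N v" "b \<in> N v" "c \<in> N v" "d \<in> N v"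
    "a \<noteq> c" "a \<noteq> d" "b \<noteq> c" "b \<noteq> d" "bad v a b" "bad v c d"
  shows "card (B2 {v}) + 2 \<le> 1 + D * card (N v)"
proof -
  have "card (\<Union>u\<in>N v. A v u) + 2 \<le> (\<Sum>u\<in>N v. card (A v u))"
    by (rule loss2b[OF finN finA assms(2,3,4,5)]) (use assms bad_A bad_def in auto)
  moreover have "card (B2 {v}) \<le> Suc (card (\<Union>u\<in>N v. A v u))"
    unfolding B2_decomp[OF assms(1)] by (metis card_insert_le_m1 diff_Suc_1 le_refl zero_less_Suc)
  ultimately show ?thesis using sumA[of v] by linarith
qed

lemma full:
  assumes "v \<in> V" "card (B2 {v}) = D * D + 1"
  shows "card (N v) = D" "\<And>a b. a \<in> N v \<Longrightarrow> b \<in> N v \<Longrightarrow> \<not> bad v a b"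
proof -
  have le: "card (N v) \<le> D" using degle assms by blast
  have "D * D \<le> D * card (N v)" using ball_bound[OF assms(1)] assms(2) by linarith
  then have "D \<le> card (N v)" using D3 by simp
  then show "card (N v) = D" using le by simp
  fix a b assume "a \<in> N v" "b \<in> N v"
  show "\<not> bad v a b"
  proof
    assume "bad v a b"
    then have "card (B2 {v}) + 1 \<le> 1 + D * card (N v)" using ball_bad1 assms \<open>a \<in> N v\<close> \<open>b \<in> N v\<close> by blast
    moreover have "D * card (N v) \<le> D * D" using le by simp
    ultimately show False using assms(2) by linarith
  qed
qed

lemma big_deg:
  assumes "v \<in> V" "D * D \<le> card (B2 {v})"
  shows "card (N v) = D"
proof (rule ccontr)
  assume "card (N v) \<noteq> D"
  moreover have "card (N v) \<le> D" using degle assms by blast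
  ultimately have "card (N v) + 1 \<le> D" by linarith
  then have "D * (card (N v) + 1) \<le> D * D" by (rule mult_le_mono2)
  then have "D * card (N v) + D \<le> D * D" by (simp add: algebra_simps)
  then show False using ball_bound[OF assms(1)] assms(2) D3 by linarith
qed


lemma le1: assumes "\<And>x y. x \<in> X \<Longrightarrow> y \<in> X \<Longrightarrow> x = y"
  shows "X = {} \<or> odd (card X)"
proof (cases "X = {}")
  case False
  then obtain x where "x \<in> X" by blast
  then have "X = {x}" using assms by blast
  then show ?thesis by simp
qed simp

lemma single_good: "v \<in> V \<Longrightarrow> odd_independent_set V E {v}"
  unfolding odd_independent_set_def independent_set_def
  using irr by (intro conjI ballI le1) auto

lemma pair_good:
  assumes "v \<in> V" "q \<in> V" "q \<notin> B2 {v}"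
  shows "odd_independent_set V E {v,q}"
  unfolding odd_independent_set_def independent_set_def
proof (intro conjI ballI le1)
  show "{v, q} \<subseteq> V" using assms by auto
  have "\<not> E v q" using assms by (auto simp: B2_mem)
  then show "\<And>u w. u \<in> {v,q} \<Longrightarrow> w \<in> {v,q} \<Longrightarrow> \<not> E u w" using irr symE by blast
  fix x y z assume "x \<in> V - {v,q}" "y \<in> N x \<inter> {v,q}" "z \<in> N x \<inter> {v,q}"
  moreover have "\<not> (E x v \<and> E x q)" using assms symE by (auto simp: B2_mem)
  ultimately show "y = z" by (auto simp: N_iff)
qed

lemma union_good:
  assumes "odd_independent_set V E S1" "odd_independent_set V E S2" "S2 \<inter> B2 S1 = {}"
  shows "odd_independent_set V E (S1 \<union> S2)"
proof -
  have s1: "S1 \<subseteq> V" "\<forall>u\<in>S1. \<forall>v\<in>S1. \<not> E u v"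
    and o1: "\<forall>v\<in>V - S1. N v \<inter> S1 = {} \<or> odd (card (N v \<inter> S1))"
    using assms(1) unfolding odd_independent_set_def independent_set_def by auto
  have s2: "S2 \<subseteq> V" "\<forall>u\<in>S2. \<forall>v\<in>S2. \<not> E u v"
    and o2: "\<forall>v\<in>V - S2. N v \<inter> S2 = {} \<or> odd (card (N v \<inter> S2))"
    using assms(2) unfolding odd_independent_set_def independent_set_def by auto
  have far: "\<And>u w. u \<in> S1 \<Longrightarrow> w \<in> S2 \<Longrightarrow> \<not> E u w \<and> (\<forall>x. \<not> (E u x \<and> E x w))"
  proof -
    fix u w assume "u \<in> S1" "w \<in> S2"
    then have "w \<notin> B2 S1" using assms(3) by blast
    then show "\<not> E u w \<and> (\<forall>x. \<not> (E u x \<and> E x w))" using \<open>u \<in> S1\<close> \<open>w \<in> S2\<close> s2 by (auto simp: B2_def)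
  qed
  have ind: "\<forall>u\<in>S1 \<union> S2. \<forall>v\<in>S1 \<union> S2. \<not> E u v"
    using s1 s2 far symE by blast
  have "\<forall>v\<in>V - (S1 \<union> S2). N v \<inter> (S1 \<union> S2) = {} \<or> odd (card (N v \<inter> (S1 \<union> S2)))"
  proof
    fix v assume v: "v \<in> V - (S1 \<union> S2)"
    show "N v \<inter> (S1 \<union> S2) = {} \<or> odd (card (N v \<inter> (S1 \<union> S2)))"
    proof (cases "N v \<inter> S1 = {}")
      case True
      then have "N v \<inter> (S1 \<union> S2) = N v \<inter> S2" by blast
      then show ?thesis using o2 v by auto
    next
      case False
      then obtain u where "u \<in> S1" "E v u" by (auto simp: N_iff)
      then have "N v \<inter> S2 = {}" using far symE by (auto simp: N_iff)
      then have "N v \<inter> (S1 \<union> S2) = N v \<inter> S1" by blast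
      then show ?thesis using o1 v by auto
    qed
  qed
  then show ?thesis using s1 s2 ind unfolding odd_independent_set_def independent_set_def by blast
qed

lemma triple_good:
  assumes "w \<in> V" "a \<in> N w" "b \<in> N w" "c \<in> N w" "a \<noteq> b" "a \<noteq> c" "b \<noteq> c"
    "\<not> bad w a b" "\<not> bad w a c" "\<not> bad w b c"
  shows "odd_independent_set V E {a,b,c}"
  unfolding odd_independent_set_def independent_set_def
proof (intro conjI ballI)
  show "{a,b,c} \<subseteq> V" using assms NsubV by auto
  have nab: "\<not> E a b" "\<not> E a c" "\<not> E b c" using assms unfolding bad_def by auto
  show "\<And>u v. u \<in> {a,b,c} \<Longrightarrow> v \<in> {a,b,c} \<Longrightarrow> \<not> E u v" using nab irr symE by blast
  fix x assume x: "x \<in> V - {a,b,c}"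
  show "N x \<inter> {a,b,c} = {} \<or> odd (card (N x \<inter> {a,b,c}))"
  proof (cases "x = w")
    case True
    then have "N x \<inter> {a,b,c} = {a,b,c}" using assms by auto
    then show ?thesis using assms by simp
  next
    case False
    have nc: "\<not> (E x a \<and> E x b)" "\<not> (E x a \<and> E x c)" "\<not> (E x b \<and> E x c)"
      using assms False symE unfolding bad_def by blast+
    show ?thesis by (rule le1) (use nc in \<open>auto simp: N_iff\<close>)
  qed
qed

lemma triple_cost:
  assumes "w \<in> V" "a \<in> N w" "b \<in> N w" "c \<in> N w" "a \<noteq> b" "a \<noteq> c" "b \<noteq> c"
  shows "card (B2 {a,b,c}) \<le> 3 * (D * D - 1)"
proof -
  let ?K = "insert w (N w)"
  have sub: "?K \<subseteq> B2 {t}" if t: "t \<in> N w" for t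
  proof
    fix x assume x: "x \<in> ?K"
    have tw: "E w t" using t N_iff by blast
    show "x \<in> B2 {t}"
    proof (cases "x = w")
      case True
      then show ?thesis using tw symE assms(1) by (auto simp: B2_mem)
    next
      case False
      then have "E w x" using x N_iff by blast
      then show ?thesis using tw symE inV by (auto simp: B2_mem)
    qed
  qed
  have kc: "4 \<le> card ?K"
  proof -
    have "{a,b,c} \<subseteq> N w" using assms by auto
    then have "3 \<le> card (N w)" using assms finN by (metis card_3_iff card_mono)
    moreover have "w \<notin> N w" using irr by (simp add: N_iff)
    ultimately show ?thesis using finN by simp
  qed
  have tV: "a \<in> V" "b \<in> V" "c \<in> V" using assms NsubV by auto
  have bb: "card (B2 {a}) \<le> 1 + D * D" "card (B2 {b}) \<le> 1 + D * D" "card (B2 {c}) \<le> 1 + D * D"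
    using ball_bound2 tV by auto
  have eq: "B2 {a,b,c} = (B2 {a} \<union> B2 {b}) \<union> B2 {c}"
    by (metis B2_insert sup_assoc)
  have 1: "card (B2 {a}) + card (B2 {b}) = card (B2 {a} \<union> B2 {b}) + card (B2 {a} \<inter> B2 {b})"
    using card_Un_Int finB2 by blast
  have 2: "card (B2 {a} \<union> B2 {b}) + card (B2 {c}) = card ((B2 {a} \<union> B2 {b}) \<union> B2 {c}) + card ((B2 {a} \<union> B2 {b}) \<inter> B2 {c})"
    using card_Un_Int finB2 by (meson finite_UnI)
  have 3: "card ?K \<le> card (B2 {a} \<inter> B2 {b})"
    by (rule card_mono) (use finB2 sub assms in auto)
  have 4: "card ?K \<le> card ((B2 {a} \<union> B2 {b}) \<inter> B2 {c})"
    by (rule card_mono) (use finB2 sub assms in auto)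
  have "card (B2 {a,b,c}) + 8 \<le> 3 * (D * D) + 3"
    unfolding eq using 1 2 3 4 kc bb by linarith
  moreover have "1 \<le> D * D" using D3 by simp
  ultimately show ?thesis by linarith
qed

lemma parity: "finite C \<Longrightarrow> even (\<Sum>z\<in>C. card {x\<in>C. E z x})"
proof (induction C rule: finite_induct)
  case empty
  then show ?case by simp
next
  case (insert y C)
  have a: "(\<Sum>z\<in>insert y C. card {x\<in>insert y C. E z x})
      = card {x\<in>insert y C. E y x} + (\<Sum>z\<in>C. card {x\<in>insert y C. E z x})"
    using insert by simp
  have b: "card {x\<in>insert y C. E y x} = card {x\<in>C. E y x}"
    using irr by (metis (no_types, lifting) Collect_cong insert_iff mem_Collect_eq)
  have c: "card {x\<in>insert y C. E z x} = card {x\<in>C. E z x} + (if E z y then 1 else 0)" if "z \<in> C" for z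
  proof -
    have fin: "finite {x\<in>C. E z x}" using insert by simp
    have "y \<notin> {x\<in>C. E z x}" using insert by simp
    moreover have "{x\<in>insert y C. E z x} = (if E z y then insert y {x\<in>C. E z x} else {x\<in>C. E z x})" by auto
    ultimately show ?thesis by (cases "E z y") (use fin insert.hyps(2) in simp_all)
  qed
  have d: "(\<Sum>z\<in>C. card {x\<in>insert y C. E z x}) = (\<Sum>z\<in>C. card {x\<in>C. E z x}) + (\<Sum>z\<in>C. (if E z y then 1 else 0))"
    using c by (simp add: sum.distrib)
  have e: "(\<Sum>z\<in>C. (if E z y then 1 else 0::nat)) = card {x\<in>C. E y x}"
  proof -
    have "(\<Sum>z\<in>C. (if E z y then 1 else 0::nat)) = card (C \<inter> {z. E z y})"
      using insert by (simp add: sum.If_cases)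
    also have "C \<inter> {z. E z y} = {x\<in>C. E y x}" using symE by blast
    finally show ?thesis .
  qed
  show ?case unfolding a b d e using insert by simp
qed


lemma card_split: assumes f: "finite X" shows "card X = card (X \<inter> R) + card (X - R)"
proof -
  have "card ((X \<inter> R) \<union> (X - R)) = card (X \<inter> R) + card (X - R)"
    by (rule card_Un_disjoint) (use f in auto)
  moreover have "(X \<inter> R) \<union> (X - R) = X" by blast
  ultimately show ?thesis by simp
qed

definition unit_ok :: "'a set \<Rightarrow> 'a set \<Rightarrow> bool" where
  "unit_ok R U \<longleftrightarrow> U \<subseteq> R \<and> U \<noteq> {} \<and> odd_independent_set V E U \<and> card (B2 U \<inter> R) \<le> (D * D - 1) * card U"

lemma triple_unit:
  assumes "w \<in> V" "a \<in> N w" "b \<in> N w" "c \<in> N w" "a \<noteq> b" "a \<noteq> c" "b \<noteq> c"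
    "\<not> bad w a b" "\<not> bad w a c" "\<not> bad w b c" "a \<in> R" "b \<in> R" "c \<in> R"
  shows "\<exists>U. unit_ok R U"
proof -
  have "card (B2 {a,b,c} \<inter> R) \<le> card (B2 {a,b,c})" by (rule card_mono) (auto simp: finB2)
  also have "\<dots> \<le> 3 * (D * D - 1)" by (rule triple_cost[OF assms(1-7)])
  also have "3 * (D * D - 1) = (D * D - 1) * card {a,b,c}" using assms(5,6,7) by simp
  finally have c: "card (B2 {a,b,c} \<inter> R) \<le> (D * D - 1) * card {a,b,c}" .
  have g: "odd_independent_set V E {a,b,c}" by (rule triple_good[OF assms(1-10)])
  have "unit_ok R {a,b,c}" unfolding unit_ok_def using c g assms(11,12,13) by simp
  then show ?thesis by blast
qed

lemma three_in:
  assumes "3 \<le> card X" "finite X"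
  obtains a b c where "a \<in> X" "b \<in> X" "c \<in> X" "a \<noteq> b" "a \<noteq> c" "b \<noteq> c"
proof -
  obtain T where T: "T \<subseteq> X" "card T = 3" using obtain_subset_with_card_n assms(1) by metis
  then obtain x y z where "T = {x,y,z}" "x \<noteq> y" "x \<noteq> z" "y \<noteq> z" unfolding card_3_iff by blast
  then show ?thesis using that T(1) by blast
qed

lemma four_in:
  assumes "4 \<le> card X" "finite X"
  obtains a b c d where "a \<in> X" "b \<in> X" "c \<in> X" "d \<in> X" "a \<noteq> b" "a \<noteq> c" "a \<noteq> d" "b \<noteq> c" "b \<noteq> d" "c \<noteq> d"
proof -
  obtain T where T: "T \<subseteq> X" "card T = 4" using obtain_subset_with_card_n assms(1) by metis
  then have "T \<noteq> {}" by auto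
  then obtain a where a: "a \<in> T" by blast
  have fT: "finite T" using T(2) card.infinite by fastforce
  have "card (T - {a}) = 3" using a T(2) fT by simp
  then obtain x y z where "T - {a} = {x,y,z}" "x \<noteq> y" "x \<noteq> z" "y \<noteq> z" unfolding card_3_iff by blast
  moreover then have "x \<in> T" "y \<in> T" "z \<in> T" "a \<noteq> x" "a \<noteq> y" "a \<noteq> z" by blast+
  ultimately show ?thesis using that[of a x y z] T(1) a by blast
qed

lemma caseB:
  assumes R: "R \<subseteq> V" and H1: "\<forall>u\<in>R. D * D \<le> card (B2 {u} \<inter> R)"
    and v: "v \<in> R" and fv: "card (B2 {v}) = D * D + 1"
  shows "\<exists>U. unit_ok R U"
proof -
  have vV: "v \<in> V" using R v by blast
  note fullv = full[OF vV fv]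
  show ?thesis
  proof (cases "3 \<le> card (N v \<inter> R)")
    case True
    then obtain a b c where "a \<in> N v \<inter> R" "b \<in> N v \<inter> R" "c \<in> N v \<inter> R" "a \<noteq> b" "a \<noteq> c" "b \<noteq> c"
      using three_in finN by (metis finite_Int)
    then show ?thesis using triple_unit[OF vV] fullv by auto
  next
    case False
    have NB: "N v \<subseteq> B2 {v}" using inV by (auto simp: B2_mem N_iff)
    have "card (B2 {v}) = card (B2 {v} \<inter> R) + card (B2 {v} - R)" using card_split finB2 by blast
    then have c1: "card (B2 {v} - R) \<le> 1" using H1 v fv by force
    have "card (N v - R) \<le> card (B2 {v} - R)" by (rule card_mono) (use NB finB2 in auto)
    then have c2: "card (N v - R) \<le> 1" using c1 by linarith
    have c3: "card (N v) = card (N v \<inter> R) + card (N v - R)" using card_split finN by blast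
    have "card (N v \<inter> R) \<ge> 1" using c2 c3 fullv(1) D3 by linarith
    then obtain b where b: "b \<in> N v" "b \<in> R" by (metis One_nat_def Int_iff card.empty ex_in_conv not_less_eq_eq zero_le)
    have "card (N v - R) \<ge> 1" using False c3 fullv(1) D3 by linarith
    then obtain a where a: "a \<in> N v" "a \<notin> R" by (metis DiffE One_nat_def card.empty ex_in_conv not_less_eq_eq zero_le)
    have ab: "a \<noteq> b" using a b by blast
    have bV: "b \<in> V" and aV: "a \<in> V" using a b NsubV by auto
    have aB: "a \<in> B2 {b}" using a b aV symE by (auto simp: B2_mem N_iff)
    have cb: "card (B2 {b}) = card (B2 {b} \<inter> R) + card (B2 {b} - R)" using card_split finB2 by blast
    have "1 \<le> card (B2 {b} - R)" using aB a finB2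
      by (metis DiffI One_nat_def Suc_leI card_gt_0_iff empty_iff finite_Diff)
    moreover have "D * D \<le> card (B2 {b} \<inter> R)" using H1 b by blast
    moreover have "card (B2 {b}) \<le> 1 + D * D" using ball_bound2 bV by blast
    ultimately have fb: "card (B2 {b}) = D * D + 1" and cb1: "card (B2 {b} - R) = 1" using cb by linarith+
    have BR: "B2 {b} - R = {a}" using cb1 aB a by (metis DiffI card_1_singletonE singletonD)
    have nba: "\<not> E b a" using fullv(2)[OF b(1) a(1)] ab unfolding bad_def by blast
    have NbR: "N b \<subseteq> R"
    proof
      fix x assume x: "x \<in> N b"
      then have "x \<in> B2 {b}" using inV by (auto simp: B2_mem N_iff)
      moreover have "x \<noteq> a" using x nba N_iff by blast
      ultimately show "x \<in> R" using BR by blast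
    qed
    note fullb = full[OF bV fb]
    obtain a' b' c' where "a' \<in> N b" "b' \<in> N b" "c' \<in> N b" "a' \<noteq> b'" "a' \<noteq> c'" "b' \<noteq> c'"
      using three_in[of "N b"] finN fullb(1) D3 by metis
    then show ?thesis using triple_unit[OF bV] fullb NbR by blast
  qed
qed


lemma caseC:
  assumes R: "R \<subseteq> V" and H1: "\<forall>u\<in>R. D * D \<le> card (B2 {u} \<inter> R)"
    and H2: "\<forall>u\<in>R. card (B2 {u}) \<noteq> D * D + 1" and v: "v \<in> R"
  shows "\<exists>U. unit_ok R U"
proof -
  have st: "card (B2 {u}) = D * D \<and> B2 {u} \<subseteq> R \<and> card (N u) = D" if u: "u \<in> R" for u
  proof -
    have uV: "u \<in> V" using u R by blast
    have a: "card (B2 {u} \<inter> R) \<le> card (B2 {u})" by (rule card_mono) (auto simp: finB2)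
    have b: "card (B2 {u}) \<le> 1 + D * D" using ball_bound2 uV by blast
    have c: "card (B2 {u}) = D * D" using H1 H2 u a b by force
    have "B2 {u} \<inter> R = B2 {u}"
      by (rule card_subset_eq) (use finB2 H1 u a c in auto)
    then have "B2 {u} \<subseteq> R" by blast
    moreover have "card (N u) = D" by (rule big_deg[OF uV]) (use c in simp)
    ultimately show ?thesis using c by blast
  qed
  have vV: "v \<in> V" using v R by blast
  have NvR: "N v \<subseteq> R" using st[OF v] inV by (auto simp: B2_mem N_iff)
  show ?thesis
  proof (cases "\<exists>a b c. a \<in> N v \<and> b \<in> N v \<and> c \<in> N v \<and> a \<noteq> b \<and> a \<noteq> c \<and> b \<noteq> c \<and> \<not> bad v a b \<and> \<not> bad v a c \<and> \<not> bad v b c")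
    case True
    then obtain a b c where abc: "a \<in> N v" "b \<in> N v" "c \<in> N v" "a \<noteq> b" "a \<noteq> c" "b \<noteq> c" "\<not> bad v a b" "\<not> bad v a c" "\<not> bad v b c"
      by blast
    show ?thesis by (rule triple_unit[OF vV abc]) (use abc NvR in auto)
  next
    case notri: False
    show ?thesis
    proof (cases "D = 3")
      case False
      then have D4: "4 \<le> card (N v)" using st[OF v] D3 by simp
      obtain a b c d where abcd: "a \<in> N v" "b \<in> N v" "c \<in> N v" "d \<in> N v" "a \<noteq> b" "a \<noteq> c" "a \<noteq> d" "b \<noteq> c" "b \<noteq> d" "c \<noteq> d"
        using four_in[OF D4 finN] by metis
      have tri: "bad v x y \<or> bad v x z \<or> bad v y z"
        if "x \<in> N v" "y \<in> N v" "z \<in> N v" "x \<noteq> y" "x \<noteq> z" "y \<noteq> z" for x y z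
        using notri that by blast
      have L2a: False if "x \<in> N v" "y \<in> N v" "z \<in> N v" "y \<noteq> z" "bad v x y" "bad v x z" for x y z
      proof -
        have "card (B2 {v}) + 2 \<le> 1 + D * card (N v)" by (rule ball_bad2a[OF vV that])
        then show False using st[OF v] by simp
      qed
      have L2b: False if "x \<in> N v" "y \<in> N v" "z \<in> N v" "u \<in> N v" "x \<noteq> z" "x \<noteq> u" "y \<noteq> z" "y \<noteq> u"
        "bad v x y" "bad v z u" for x y z u
      proof -
        have "card (B2 {v}) + 2 \<le> 1 + D * card (N v)" by (rule ball_bad2b[OF vV that])
        then show False using st[OF v] by simp
      qed
      have False
      proof -
        consider (ab) "bad v a b" | (ac) "bad v a c" | (bc) "bad v b c" using tri[of a b c] abcd by blast
        then show False
        proof cases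
          case ab
          consider "bad v a c" | "bad v a d" | "bad v c d" using tri[of a c d] abcd by blast
          then show False
          proof cases
            case 1 then show False using L2a[of a b c] ab abcd by blast
          next
            case 2 then show False using L2a[of a b d] ab abcd by blast
          next
            case 3 then show False using L2b[of a b c d] ab abcd by blast
          qed
        next
          case ac
          consider "bad v a b" | "bad v a d" | "bad v b d" using tri[of a b d] abcd by blast
          then show False
          proof cases
            case 1 then show False using L2a[of a c b] ac abcd by blast
          next
            case 2 then show False using L2a[of a c d] ac abcd by blast
          next
            case 3 then show False using L2b[of a c b d] ac abcd by blast
          qed
        next
          case bc
          consider "bad v a b" | "bad v a d" | "bad v b d" using tri[of a b d] abcd by blast
          then show False
          proof cases
            case 1 then show False using L2a[of b c a] bc abcd bad_sym by blast
          next
            case 2 then show False using L2b[of b c a d] bc abcd by blast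
          next
            case 3 then show False using L2a[of b c d] bc abcd by blast
          qed
        qed
      qed
      then show ?thesis by blast
    next
      case D3eq: True
      show ?thesis
      proof (cases "\<exists>z q. z \<in> B2 {v} \<and> E z q \<and> q \<notin> B2 {v}")
        case True
        then obtain z q where z: "z \<in> B2 {v}" "E z q" "q \<notin> B2 {v}" by blast
        have qV: "q \<in> V" using inV z(2) by blast
        have zv: "z \<noteq> v" using z qV by (auto simp: B2_mem)
        have nvz: "\<not> E v z" using z qV by (auto simp: B2_mem)
        obtain x where x: "E v x" "E x z" using z(1) zv nvz by (auto simp: B2_mem)
        have xz: "x \<noteq> z" using x nvz by blast
        have zR: "z \<in> R" using z(1) st[OF v] by blast
        have "q \<in> B2 {z}" using z(2) qV by (auto simp: B2_mem)
        then have qR: "q \<in> R" using st[OF zR] by blast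
        have vq: "v \<noteq> q" using z(3) vV by (auto simp: B2_mem)
        have g: "odd_independent_set V E {v,q}" by (rule pair_good[OF vV qV z(3)])
        have eq: "B2 {v,q} = B2 {v} \<union> B2 {q}" by (rule B2_insert)
        have qz: "E q z" using z(2) symE by blast
        have zx: "E z x" using x(2) symE by blast
        have xin: "x \<in> B2 {v}" "x \<in> B2 {q}" using x qz zx inV unfolding B2_mem by blast+
        have zin: "z \<in> B2 {v}" "z \<in> B2 {q}" using z(1,2) symE inV by (auto simp: B2_mem)
        have cu: "card (B2 {v}) + card (B2 {q}) = card (B2 {v} \<union> B2 {q}) + card (B2 {v} \<inter> B2 {q})"
          using card_Un_Int finB2 by blast
        have "card {x,z} \<le> card (B2 {v} \<inter> B2 {q})" by (rule card_mono) (use finB2 xin zin in auto)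
        then have ci: "2 \<le> card (B2 {v} \<inter> B2 {q})" using xz by simp
        have "card (B2 {v,q} \<inter> R) \<le> card (B2 {v,q})" by (rule card_mono) (auto simp: finB2)
        moreover have "card (B2 {v,q}) + 2 \<le> D * D + D * D" unfolding eq using cu ci st[OF v] st[OF qR] by linarith
        moreover have "(D * D - 1) * card {v,q} = D * D + D * D - 2" using vq by (simp add: diff_mult_distrib)
        ultimately have "card (B2 {v,q} \<inter> R) \<le> (D * D - 1) * card {v,q}" by linarith
        then have "unit_ok R {v,q}" unfolding unit_ok_def using g vq v qR by simp
        then show ?thesis by blast
      next
        case False
        let ?C = "B2 {v}"
        have cl: "{x \<in> ?C. E z x} = N z" if "z \<in> ?C" for z
          using False that inV by (auto simp: N_iff)
        have CR: "?C \<subseteq> R" using st[OF v] by blast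
        have "(\<Sum>z\<in>?C. card {x \<in> ?C. E z x}) = (\<Sum>z\<in>?C. 3)"
        proof (rule sum.cong)
          fix z assume z: "z \<in> ?C"
          then have "z \<in> R" using CR by blast
          then show "card {x \<in> ?C. E z x} = 3" using cl[OF z] st D3eq by simp
        qed simp
        also have "\<dots> = 27" using st[OF v] D3eq by simp
        finally have "odd (\<Sum>z\<in>?C. card {x \<in> ?C. E z x})" by simp
        then show ?thesis using parity[OF finB2] by blast
      qed
    qed
  qed
qed

lemma unit_exists:
  assumes R: "R \<subseteq> V" "R \<noteq> {}"
  shows "\<exists>U. unit_ok R U"
proof (cases "\<exists>v\<in>R. card (B2 {v} \<inter> R) \<le> D * D - 1")
  case True
  then obtain v where v: "v \<in> R" "card (B2 {v} \<inter> R) \<le> D * D - 1" by blast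
  have "odd_independent_set V E {v}" using single_good v R by blast
  then have "unit_ok R {v}" unfolding unit_ok_def using v by simp
  then show ?thesis by blast
next
  case False
  then have H1: "\<forall>u\<in>R. D * D \<le> card (B2 {u} \<inter> R)" by force
  obtain v where v: "v \<in> R" using R by blast
  show ?thesis
  proof (cases "\<exists>u\<in>R. card (B2 {u}) = D * D + 1")
    case True
    then obtain u where "u \<in> R" "card (B2 {u}) = D * D + 1" by blast
    then show ?thesis using caseB[OF R(1) H1] by blast
  next
    case False
    then show ?thesis using caseC[OF R(1) H1 _ v] by blast
  qed
qed

lemma main: "R \<subseteq> V \<Longrightarrow> \<exists>S. S \<subseteq> R \<and> odd_independent_set V E S \<and> card R \<le> (D * D - 1) * card S"
proof (induction "card R" arbitrary: R rule: less_induct)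
  case less
  show ?case
  proof (cases "R = {}")
    case True
    have "odd_independent_set V E {}" unfolding odd_independent_set_def independent_set_def by simp
    then show ?thesis using True by auto
  next
    case False
    obtain U where U: "unit_ok R U" using unit_exists[OF less.prems False] by blast
    then have UR: "U \<subseteq> R" "U \<noteq> {}" and gU: "odd_independent_set V E U"
      and cU: "card (B2 U \<inter> R) \<le> (D * D - 1) * card U" unfolding unit_ok_def by auto
    have UB: "U \<subseteq> B2 U" using B2_self UR less.prems by blast
    have finR: "finite R" using less.prems finV finite_subset by blast
    have "card (R - B2 U) < card R"
    proof (rule psubset_card_mono[OF finR])
      show "R - B2 U \<subset> R" using UR UB by blast
    qed
    then obtain S' where S': "S' \<subseteq> R - B2 U" "odd_independent_set V E S'"
      "card (R - B2 U) \<le> (D * D - 1) * card S'"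
      using less.hyps[of "R - B2 U"] less.prems by blast
    have disj: "S' \<inter> B2 U = {}" using S'(1) by blast
    have g: "odd_independent_set V E (U \<union> S')" by (rule union_good[OF gU S'(2) disj])
    have finU: "finite U" using UR finR finite_subset by blast
    have finS: "finite S'" using S'(1) finR finite_subset by blast
    have cS: "card (U \<union> S') = card U + card S'"
      by (rule card_Un_disjoint[OF finU finS]) (use disj UB in blast)
    have "card R = card (R \<inter> B2 U) + card (R - B2 U)" using card_split finR by blast
    also have "R \<inter> B2 U = B2 U \<inter> R" by blast
    finally have "card R \<le> (D * D - 1) * card U + (D * D - 1) * card S'" using cU S'(3) by linarith
    then have "card R \<le> (D * D - 1) * card (U \<union> S')" unfolding cS by (simp only: add_mult_distrib2)
    moreover have "U \<union> S' \<subseteq> R" using UR S'(1) by blast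
    ultimately show ?thesis using g by blast
  qed
qed

end

theorem theorem5:
  fixes V :: "'a set" and E :: "'a \<Rightarrow> 'a \<Rightarrow> bool"
  assumes "simple_graph V E"
    and "max_degree V E \<ge> 3"
  shows "real (alpha_od V E) \<ge> real (card V) / (real (max_degree V E) ^ 2 - 1)"
proof -
  let ?D = "max_degree V E"
  have finV: "finite V" using assms(1) unfolding simple_graph_def by blast
  have dl: "card (nbhd V E v) \<le> ?D" if "v \<in> V" for v
    unfolding max_degree_def degree_def using finV that by (intro Max_ge) auto
  interpret G3 V E ?D using assms dl by unfold_locales auto
  obtain S where S: "S \<subseteq> V" "odd_independent_set V E S" "card V \<le> (?D * ?D - 1) * card S"
    using main by blast
  have fin: "finite {S. odd_independent_set V E S}"
  proof (rule finite_subset)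
    show "{S. odd_independent_set V E S} \<subseteq> Pow V"
      unfolding odd_independent_set_def independent_set_def by auto
  qed (use finV in simp)
  have "card S \<le> alpha_od V E" unfolding alpha_od_def using fin S(2) by (intro Max_ge) auto
  have pos: "1 \<le> ?D * ?D" using assms(2) by simp
  have eqr: "real (max_degree V E) ^ 2 - 1 = real (?D * ?D - 1)" using pos by (simp add: power2_eq_square of_nat_diff)
  have "3 * 3 \<le> ?D * ?D" using mult_le_mono[OF assms(2) assms(2)] .
  then have ppos: "real (?D * ?D - 1) > 0" by simp
  have "real (card V) \<le> real (?D * ?D - 1) * real (card S)" using S(3) by (metis of_nat_le_iff of_nat_mult)
  also have "\<dots> \<le> real (?D * ?D - 1) * real (alpha_od V E)"
    using \<open>card S \<le> alpha_od V E\<close> ppos by (intro mult_left_mono) auto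
  finally show ?thesis unfolding eqr using ppos by (simp add: divide_le_eq mult.commute)
qed

end
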